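(* Let $\theta>0$ and let $A_n^\theta(t)$ be the number of non-mutant ancestral lines at time $t$ back in the star-shaped coalescent with mutation started from $n\ge1$ lines (all lines merge into one at an exponential rate-1 time $T$; mutations at rate $\theta/2$ per line; after $T$ the single line is non-mutant iff at least one line was non-mutant at $T$ and no mutation occurs on it afterwards). Then for $n\ge1$ and $j=0,\ldots,n$, \[ P(A_n^\theta(t)=j)=\sum_{k=0}^ne^{-\lambda_kt}Q_n^{(k)}P_j^{(k)}, \] where $\lambda_0=0$, $\lambda_1=\theta/2$, $\lambda_k=1+k\theta/2$ for $k\ge2$; $Q_n^{(0)}=1$, \[ Q_n^{(1)}=\sum_{i=1}^n\binom ni\frac{(-1)^{i-1}}{1+(i-1)\theta/2},\qquad Q_n^{(k)}=\binom nk(-1)^{k-1}\frac{(k-1)(1+k\theta/2)}{1+(k-1)\theta/2},\ 1<k\le n; \] $P_0^{(0)}=1$, $P_0^{(1)}=-1$, $P_0^{(k)}=-\frac{\theta/2}{1+k\theta/2}$ for $2\le k\le n$; $P_1^{(0)}=0$, $P_1^{(k)}=1$ for $1\le k\le n$; and for $2\le j\le n$: $P_j^{(0)}=P_j^{(1)}=0$ and \[ P_j^{(k)}=\binom kj(-1)^{j-1}\frac{1+(k-1)\theta/2}{(k-1)(1+k\theta/2)},\quad 2\le k\le n \] (with $\binom kj=0$ for $j>k$). *)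

theory Defs
  imports "HOL-Probability.Probability"
begin

text \<open>Coordinate 0: merger time T ~ Exp(1).
  Coordinates 1..n: time of first mutation on line i (backwards in time), ~ Exp(theta/2).
  Coordinate n+1: time (measured from T) of the first mutation on the single line after the
  merger, ~ Exp(theta/2).\<close>

definition star_space :: "real \<Rightarrow> nat \<Rightarrow> (nat \<Rightarrow> real) measure" where
  "star_space \<theta> n =
     PiM {0..n+1} (\<lambda>i. density lborel (exponential_density (if i = 0 then 1 else \<theta> / 2)))"

definition A_count :: "nat \<Rightarrow> real \<Rightarrow> (nat \<Rightarrow> real) \<Rightarrow> nat" where
  "A_count n t \<omega> =
     (if t < \<omega> 0 then card {i \<in> {1..n}. t < \<omega> i}
      else if (\<exists>i\<in>{1..n}. \<omega> 0 < \<omega> i) \<and> t - \<omega> 0 < \<omega> (n+1) then 1 else 0)"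

definition lam :: "real \<Rightarrow> nat \<Rightarrow> real" where
  "lam \<theta> k = (if k = 0 then 0 else if k = 1 then \<theta> / 2 else 1 + real k * \<theta> / 2)"

definition Qc :: "real \<Rightarrow> nat \<Rightarrow> nat \<Rightarrow> real" where
  "Qc \<theta> n k =
     (if k = 0 then 1
      else if k = 1 then
        (\<Sum>i=1..n. real (n choose i) * (-1) ^ (i - 1) / (1 + (real i - 1) * \<theta> / 2))
      else real (n choose k) * (-1) ^ (k - 1) * ((real k - 1) * (1 + real k * \<theta> / 2))
             / (1 + (real k - 1) * \<theta> / 2))"

definition Pc :: "real \<Rightarrow> nat \<Rightarrow> nat \<Rightarrow> real" where
  "Pc \<theta> j k =
     (if j = 0 then (if k = 0 then 1 else if k = 1 then -1 else - (\<theta> / 2) / (1 + real k * \<theta> / 2))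
      else if j = 1 then (if k = 0 then 0 else 1)
      else if k \<le> 1 then 0
      else real (k choose j) * (-1) ^ (j - 1) * (1 + (real k - 1) * \<theta> / 2)
             / ((real k - 1) * (1 + real k * \<theta> / 2)))"

end

theory Submission
  imports Defs
begin


abbreviation "Mi \<theta> \<equiv> (\<lambda>i::nat. density lborel (exponential_density (if i = 0 then 1 else \<theta> / 2)))"

lemma pps: "\<theta> > 0 \<Longrightarrow> product_prob_space (Mi \<theta>)"
  unfolding product_prob_space_def product_prob_space_axioms_def product_sigma_finite_def
  by (auto intro!: prob_space_exponential_density prob_space_imp_sigma_finite)

lemma sets_Mi[simp]: "sets (Mi \<theta> i) = sets borel" by simp
lemma space_Mi[simp]: "space (Mi \<theta> i) = UNIV" by simp

lemma prob_Mi: "\<theta> > 0 \<Longrightarrow> prob_space (Mi \<theta> i)"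
  by (auto intro!: prob_space_exponential_density)

lemma meas_le:
  assumes "l > 0" "x \<ge> 0"
  shows "measure (density lborel (exponential_density l)) {..x} = 1 - exp (- x * l)"
proof -
  have "emeasure (density lborel (exponential_density l)) {..x} = ennreal (1 - exp (- x * l))"
    using emeasure_erlang_density[of l 0 x] assms by (simp add: erlang_CDF_0 mult.commute)
  moreover have "0 \<le> 1 - exp (- x * l)" using assms by simp
  ultimately show ?thesis by (simp add: measure_def)
qed

lemma meas_gt:
  assumes "l > 0" "x \<ge> 0"
  shows "measure (density lborel (exponential_density l)) {x<..} = exp (- x * l)"
proof -
  interpret prob_space "density lborel (exponential_density l)" using assms prob_space_exponential_density by auto
  have "{x<..} = space (density lborel (exponential_density l)) - {..x}" by auto
  hence "measure (density lborel (exponential_density l)) {x<..} = 1 - measure (density lborel (exponential_density l)) {..x}"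
    using prob_compl[of "{..x}"] by simp
  thus ?thesis using meas_le[OF assms] by simp
qed

lemma prod_meas:
  assumes "\<theta> > 0" "finite J" "\<And>i. i \<in> J \<Longrightarrow> F i \<in> sets borel"
  shows "measure (PiM J (Mi \<theta>)) (PiE J F) = (\<Prod>i\<in>J. measure (Mi \<theta> i) (F i))"
proof -
  interpret product_prob_space "Mi \<theta>" using pps assms by auto
  have "emeasure (PiM J (Mi \<theta>)) (PiE J F) = (\<Prod>i\<in>J. emeasure (Mi \<theta> i) (F i))"
    using emeasure_PiM assms by auto
  also have "\<dots> = (\<Prod>i\<in>J. ennreal (measure (Mi \<theta> i) (F i)))"
    by (intro prod.cong refl) (simp add: finite_measure.emeasure_eq_measure prob_space.finite_measure prob_Mi assms(1))
  also have "\<dots> = ennreal (\<Prod>i\<in>J. measure (Mi \<theta> i) (F i))"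
    by (rule prod_ennreal) simp
  finally show ?thesis by (simp add: measure_def prod_nonneg)
qed



lemma space_star: "space (star_space \<theta> n) = PiE {0..n+1} (\<lambda>_. UNIV)"
  unfolding star_space_def by (simp add: space_PiM)

lemma Bmeas:
  assumes th: "\<theta> > 0" and t: "t \<ge> 0" and j: "j \<le> n"
  shows "measure (star_space \<theta> n) {\<omega> \<in> space (star_space \<theta> n). t < \<omega> 0 \<and> card {i\<in>{1..n}. t < \<omega> i} = j}
     = exp (- t) * real (n choose j) * exp (- t * (\<theta>/2)) ^ j * (1 - exp (- t * (\<theta>/2))) ^ (n - j)"
proof -
  define I where "I = {0..n+1}"
  define Sj where "Sj = {S. S \<subseteq> {1..n} \<and> card S = j}"
  define F where "F S i = (if i = 0 then {t<..} else if i \<in> S then {t<..} else if i \<le> n then {..t} else (UNIV::real set))" for S :: "nat set" and i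
  let ?M = "star_space \<theta> n"
  interpret P: product_prob_space "Mi \<theta>" using pps th by auto
  interpret Q: prob_space ?M unfolding star_space_def by (rule prob_space_PiM) (rule prob_Mi[OF th])
  have setq: "{\<omega> \<in> space ?M. t < \<omega> 0 \<and> card {i\<in>{1..n}. t < \<omega> i} = j} = (\<Union>S\<in>Sj. PiE I (F S))"
  proof (intro equalityI subsetI)
    fix \<omega> assume w: "\<omega> \<in> {\<omega> \<in> space ?M. t < \<omega> 0 \<and> card {i\<in>{1..n}. t < \<omega> i} = j}"
    define S where "S = {i\<in>{1..n}. t < \<omega> i}"
    have "S \<in> Sj" using w unfolding S_def Sj_def by auto
    moreover have "\<omega> \<in> PiE I (F S)" using w unfolding S_def F_def I_def space_star
      by (auto simp: PiE_def Pi_def)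
    ultimately show "\<omega> \<in> (\<Union>S\<in>Sj. PiE I (F S))" by blast
  next
    fix \<omega> assume "\<omega> \<in> (\<Union>S\<in>Sj. PiE I (F S))"
    then obtain S where S: "S \<in> Sj" "\<omega> \<in> PiE I (F S)" by blast
    have "\<omega> \<in> space ?M" using S(2) unfolding space_star I_def by (auto simp: PiE_def)
    moreover have "t < \<omega> 0" using S(2) unfolding I_def F_def by (auto simp: PiE_def Pi_def)
    moreover have "{i\<in>{1..n}. t < \<omega> i} = S"
    proof (intro equalityI subsetI)
      fix i assume "i \<in> {i\<in>{1..n}. t < \<omega> i}"
      hence "i \<in> I" "\<omega> i \<in> F S i" "i \<noteq> 0" "i \<le> n" "t < \<omega> i" using S(2) unfolding I_def by (auto simp: PiE_def Pi_def)
      thus "i \<in> S" unfolding F_def by (auto split: if_splits)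
    next
      fix i assume "i \<in> S"
      hence "i \<in> {1..n}" using S(1) unfolding Sj_def by auto
      hence "i \<in> I" "\<omega> i \<in> F S i" using S(2) unfolding I_def by (auto simp: PiE_def Pi_def)
      thus "i \<in> {i\<in>{1..n}. t < \<omega> i}" using \<open>i \<in> S\<close> \<open>i \<in> {1..n}\<close> unfolding F_def by auto
    qed
    ultimately show "\<omega> \<in> {\<omega> \<in> space ?M. t < \<omega> 0 \<and> card {i\<in>{1..n}. t < \<omega> i} = j}"
      using S(1) unfolding Sj_def by auto
  qed
  have finSj: "finite Sj" unfolding Sj_def by (rule finite_subset[of _ "Pow {1..n}"]) auto
  have setsF: "PiE I (F S) \<in> sets ?M" for S
    unfolding star_space_def I_def by (rule sets_PiM_I_finite) (auto simp: F_def)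
  have disj: "disjoint_family_on (\<lambda>S. PiE I (F S)) Sj"
  unfolding disjoint_family_on_def
  proof (intro ballI impI)
    fix S S' assume SS: "S \<in> Sj" "S' \<in> Sj" "S \<noteq> S'"
    then obtain i where i: "i \<in> {1..n}" "(i \<in> S \<and> i \<notin> S') \<or> (i \<in> S' \<and> i \<notin> S)" unfolding Sj_def by blast
    have "i \<in> I" using i unfolding I_def by auto
    show "PiE I (F S) \<inter> PiE I (F S') = {}"
    proof (rule ccontr)
      assume "PiE I (F S) \<inter> PiE I (F S') \<noteq> {}"
      then obtain \<omega> where "\<omega> \<in> PiE I (F S)" "\<omega> \<in> PiE I (F S')" by blast
      hence "\<omega> i \<in> F S i" "\<omega> i \<in> F S' i" using \<open>i \<in> I\<close> by (auto simp: PiE_def Pi_def)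
      thus False using i unfolding F_def by (auto split: if_splits)
    qed
  qed
  define p where "p = exp (- t * (\<theta>/2))"
  have eachm: "measure ?M (PiE I (F S)) = exp (- t) * p ^ j * (1 - p) ^ (n - j)" if S: "S \<in> Sj" for S
  proof -
    define G where "G i = measure (Mi \<theta> i) (F S i)" for i
    have "measure ?M (PiE I (F S)) = (\<Prod>i\<in>I. G i)"
      unfolding star_space_def I_def G_def by (rule prod_meas[OF th]) (auto simp: F_def)
    also have "(\<Prod>i\<in>I. G i) = G 0 * (G (n+1) * (\<Prod>i\<in>{1..n}. G i))"
    proof -
      have "I = insert 0 (insert (n+1) {1..n})" unfolding I_def by auto
      thus ?thesis by simp
    qed
    also have "(\<Prod>i\<in>{1..n}. G i) = (\<Prod>i\<in>{1..n} - S. G i) * (\<Prod>i\<in>S. G i)"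
      using S unfolding Sj_def by (intro prod.subset_diff) auto
    also have "(\<Prod>i\<in>{1..n} - S. G i) = (\<Prod>i\<in>{1..n} - S. 1 - p)"
      by (intro prod.cong refl) (auto simp: G_def F_def p_def meas_le th t)
    also have "(\<Prod>i\<in>S. G i) = (\<Prod>i\<in>S. p)"
      using S unfolding Sj_def by (intro prod.cong refl) (auto simp: G_def F_def p_def meas_gt th t)
    also have "G 0 = exp (- t)" by (simp add: G_def F_def meas_gt t)
    also have "G (n+1) = 1"
    proof -
      have "n+1 \<notin> S" using S unfolding Sj_def by auto
      thus ?thesis using prob_space.prob_space[OF prob_Mi[OF th, of "n+1"]] by (simp add: G_def F_def)
    qed
    also have "(\<Prod>i\<in>{1..n} - S. 1 - p) = (1 - p) ^ (n - j)"
    proof -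
      have fS: "finite S" using S unfolding Sj_def by (blast intro: rev_finite_subset[OF finite_atLeastAtMost])
      have "card ({1..n} - S) = n - j" using S fS unfolding Sj_def by (subst card_Diff_subset) auto
      thus ?thesis by simp
    qed
    also have "(\<Prod>i\<in>S. p) = p ^ j"
    proof -
      have "finite S" using S unfolding Sj_def by (blast intro: rev_finite_subset[OF finite_atLeastAtMost])
      thus ?thesis using S unfolding Sj_def by simp
    qed
    finally show ?thesis by simp
  qed
  have "measure ?M (\<Union>S\<in>Sj. PiE I (F S)) = (\<Sum>S\<in>Sj. measure ?M (PiE I (F S)))"
    by (rule Q.finite_measure_finite_Union[OF finSj _ disj]) (use setsF in auto)
  also have "\<dots> = (\<Sum>S\<in>Sj. exp (- t) * p ^ j * (1 - p) ^ (n - j))" by (intro sum.cong refl eachm)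
  also have "card Sj = n choose j" unfolding Sj_def using n_subsets[of "{1..n}" j] by simp
  hence "(\<Sum>S\<in>Sj. exp (- t) * p ^ j * (1 - p) ^ (n - j)) = exp (- t) * real (n choose j) * p ^ j * (1 - p) ^ (n - j)"
    by simp
  finally show ?thesis using setq p_def by simp
qed



lemma binom1:
  fixes q :: real
  shows "1 - (1 - q) ^ n = (\<Sum>i=1..n. real (n choose i) * (-1) ^ (i - 1) * q ^ i)"
proof -
  have h0: "(0::nat) \<notin> {1..n}" by simp
  have "(1 - q) ^ n = (-q + 1) ^ n" by simp
  also have "\<dots> = (\<Sum>k\<le>n. real (n choose k) * (-q) ^ k * 1 ^ (n - k))" by (rule binomial_ring)
  also have "\<dots> = (\<Sum>k\<in>insert 0 {1..n}. real (n choose k) * (-q) ^ k)"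
    by (intro sum.cong) auto
  also have "\<dots> = 1 + (\<Sum>k=1..n. real (n choose k) * (-q) ^ k)"
    unfolding sum.insert[OF finite_atLeastAtMost h0] by simp
  also have "(\<Sum>k=1..n. real (n choose k) * (-q) ^ k) = (\<Sum>i=1..n. - (real (n choose i) * (-1) ^ (i - 1) * q ^ i))"
  proof (intro sum.cong refl)
    fix k assume "k \<in> {1..n}"
    then obtain m where "k = Suc m" by (cases k) auto
    have "(-q) ^ k = (-1) ^ k * q ^ k" by (metis mult_minus1 power_mult_distrib)
    also have "(-1::real) ^ k = - ((-1) ^ (k - 1))" using \<open>k = Suc m\<close> by simp
    finally show "real (n choose k) * (-q) ^ k = - (real (n choose k) * (-1) ^ (k - 1) * q ^ k)"
      by simp
  qed
  finally show ?thesis by (simp add: sum_negf)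
qed

lemma exp_int:
  fixes c t :: real
  assumes c: "c > 0" and t: "t \<ge> 0"
  shows "((\<lambda>y. exp (- (c * y))) has_integral (1 - exp (- (c * t))) / c) {0..t}"
proof -
  have "((\<lambda>y. exp (- (c * y))) has_integral ((- exp (- (c * t)) / c) - (- exp (- (c * 0)) / c))) {0..t}"
  proof (rule fundamental_theorem_of_calculus[of 0 t "\<lambda>y. - exp (- (c * y)) / c" "\<lambda>y. exp (- (c * y))"])
    show "0 \<le> t" by fact
  next
    fix x assume "x \<in> {0..t}"
    show "((\<lambda>y. - exp (- (c * y)) / c) has_vector_derivative exp (- (c * x))) (at x within {0..t})"
      unfolding has_real_derivative_iff_has_vector_derivative[symmetric]
      using c by (auto intro!: derivative_eq_intros simp: field_simps)
  qed
  moreover have eq: "(- exp (- (c * t)) / c) - (- exp (- (c * 0)) / c) = (1 - exp (- (c * t))) / c"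
    by (simp add: diff_divide_distrib)
  ultimately show ?thesis by (simp only: eq)
qed

lemma integ:
  fixes a t :: real
  assumes a: "a > 0" and t: "t \<ge> 0"
  shows "((\<lambda>y. exp (- y) * (1 - (1 - exp (- y * a)) ^ n) * exp (- (t - y) * a)) has_integral
     (\<Sum>i=1..n. real (n choose i) * (-1) ^ (i - 1) * (exp (- t * a) - exp (- t) * exp (- t * a) ^ i) / (1 + (real i - 1) * a))) {0..t}"
proof -
  define c where "c i = 1 + (real i - 1) * a" for i :: nat
  have cpos: "i \<ge> 1 \<Longrightarrow> c i > 0" for i using a unfolding c_def by (simp add: add_pos_nonneg)
  have pt: "exp (- y) * (1 - (1 - exp (- y * a)) ^ n) * exp (- (t - y) * a) =
     (\<Sum>i=1..n. (real (n choose i) * (-1) ^ (i - 1) * exp (- t * a)) * exp (- (c i * y)))" for y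
  proof -
    have "exp (- y) * (1 - (1 - exp (- y * a)) ^ n) * exp (- (t - y) * a) =
      (\<Sum>i=1..n. real (n choose i) * (-1) ^ (i - 1) * (exp (- y) * exp (- y * a) ^ i * exp (- (t - y) * a)))"
      unfolding binom1 sum_distrib_left sum_distrib_right by (intro sum.cong refl) (simp add: algebra_simps)
    also have "\<dots> = (\<Sum>i=1..n. (real (n choose i) * (-1) ^ (i - 1) * exp (- t * a)) * exp (- (c i * y)))"
    proof (intro sum.cong refl)
      fix i assume "i \<in> {1..n}"
      have "exp (- y) * exp (- y * a) ^ i * exp (- (t - y) * a) = exp (- y + real i * (- y * a) + (- (t - y) * a))"
        unfolding exp_add exp_of_nat_mult by simp
      also have "- y + real i * (- y * a) + (- (t - y) * a) = - t * a + (- (c i * y))"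
        by (simp add: c_def algebra_simps)
      also have "exp (- t * a + (- (c i * y))) = exp (- t * a) * exp (- (c i * y))"
        by (rule exp_add)
      finally show "real (n choose i) * (-1) ^ (i - 1) * (exp (- y) * exp (- y * a) ^ i * exp (- (t - y) * a)) =
          (real (n choose i) * (-1) ^ (i - 1) * exp (- t * a)) * exp (- (c i * y))" by simp
    qed
    finally show ?thesis .
  qed
  have "((\<lambda>y. \<Sum>i=1..n. (real (n choose i) * (-1) ^ (i - 1) * exp (- t * a)) * exp (- (c i * y))) has_integral
      (\<Sum>i=1..n. (real (n choose i) * (-1) ^ (i - 1) * exp (- t * a)) * ((1 - exp (- (c i * t))) / c i))) {0..t}"
    by (intro has_integral_sum has_integral_mult_right exp_int cpos t finite_atLeastAtMost) auto
  moreover have "(\<Sum>i=1..n. (real (n choose i) * (-1) ^ (i - 1) * exp (- t * a)) * ((1 - exp (- (c i * t))) / c i)) =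
     (\<Sum>i=1..n. real (n choose i) * (-1) ^ (i - 1) * (exp (- t * a) - exp (- t) * exp (- t * a) ^ i) / (1 + (real i - 1) * a))"
  proof (intro sum.cong refl)
    fix i assume "i \<in> {1..n}"
    have "exp (- t * a) * exp (- (c i * t)) = exp (- t * a + - (c i * t))" by (rule exp_add[symmetric])
    also have "- t * a + - (c i * t) = - t + real i * (- t * a)" by (simp add: c_def algebra_simps)
    also have "exp (- t + real i * (- t * a)) = exp (- t) * exp (- t * a) ^ i" unfolding exp_add exp_of_nat_mult ..
    finally have e: "exp (- t * a) * exp (- (c i * t)) = exp (- t) * exp (- t * a) ^ i" .
    have "(real (n choose i) * (-1) ^ (i - 1) * exp (- t * a)) * ((1 - exp (- (c i * t))) / c i) =
       real (n choose i) * (-1) ^ (i - 1) * (exp (- t * a) - exp (- t * a) * exp (- (c i * t))) / c i"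
      by (simp add: right_diff_distrib)
    also have "\<dots> = real (n choose i) * (-1) ^ (i - 1) * (exp (- t * a) - exp (- t) * exp (- t * a) ^ i) / (1 + (real i - 1) * a)"
      unfolding e unfolding c_def ..
    finally show "(real (n choose i) * (-1) ^ (i - 1) * exp (- t * a)) * ((1 - exp (- (c i * t))) / c i) =
       real (n choose i) * (-1) ^ (i - 1) * (exp (- t * a) - exp (- t) * exp (- t * a) ^ i) / (1 + (real i - 1) * a)" .
  qed
  ultimately show ?thesis unfolding pt by simp
qed


lemma meas_le2:
  assumes "l > 0"
  shows "measure (density lborel (exponential_density l)) {..x} = (if x < 0 then 0 else 1 - exp (- x * l))"
proof -
  have "emeasure (density lborel (exponential_density l)) {..x} = ennreal (if x < 0 then 0 else 1 - exp (- x * l))"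
    using emeasure_erlang_density[of l 0 x] assms by (simp add: erlang_CDF_0 mult.commute)
  moreover have "0 \<le> (if x < 0 then 0 else 1 - exp (- x * l))" using assms by simp
  ultimately show ?thesis by (simp add: measure_def)
qed

lemma comp_meas[measurable]:
  assumes "i \<le> n + 1"
  shows "(\<lambda>\<omega>. \<omega> i) \<in> borel_measurable (star_space \<theta> n)"
proof -
  have "(\<lambda>\<omega>. \<omega> i) \<in> measurable (PiM {0..n+1} (Mi \<theta>)) (Mi \<theta> i)"
    by (rule measurable_component_singleton) (use assms in auto)
  thus ?thesis unfolding star_space_def by (simp add: measurable_cong_sets[OF refl sets_Mi])
qed

lemma EV1_sets:
  "{\<omega> \<in> space (star_space \<theta> n). \<omega> 0 \<le> t \<and> (\<exists>i\<in>{1..n}. \<omega> 0 < \<omega> i) \<and> t - \<omega> 0 < \<omega> (n+1)} \<in> sets (star_space \<theta> n)"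
  by measurable



lemma inner_meas:
  assumes th: "\<theta> > 0" and yt: "y \<le> t"
  shows "emeasure (PiM {1..n+1} (Mi \<theta>)) {x \<in> space (PiM {1..n+1} (Mi \<theta>)). (\<exists>i\<in>{1..n}. y < x i) \<and> t - y < x (n+1)}
    = ennreal (exp (- (t - y) * (\<theta>/2)) - exp (- (t - y) * (\<theta>/2)) * (if y < 0 then 0 else 1 - exp (- y * (\<theta>/2))) ^ n)"
proof -
  define J where "J = {1..n+1}"
  define A where "A = PiE J (\<lambda>i. if i = n+1 then {t-y<..} else (UNIV :: real set))"
  define B where "B = PiE J (\<lambda>i. if i = n+1 then {t-y<..} else {..y})"
  define Fy where "Fy = (if y < 0 then 0 else 1 - exp (- y * (\<theta>/2)))"
  define c where "c = exp (- (t - y) * (\<theta>/2))"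
  let ?N = "PiM J (Mi \<theta>)"
  interpret N: prob_space ?N by (rule prob_space_PiM) (rule prob_Mi[OF th])
  have sp: "space ?N = PiE J (\<lambda>_. UNIV)" by (simp add: space_PiM)
  have seteq: "{x \<in> space ?N. (\<exists>i\<in>{1..n}. y < x i) \<and> t - y < x (n+1)} = A - B"
    unfolding sp unfolding A_def B_def J_def by (auto simp: PiE_def Pi_def not_le)
  have As: "A \<in> sets ?N" unfolding A_def by (rule sets_PiM_I_finite) (auto simp: J_def)
  have Bs: "B \<in> sets ?N" unfolding B_def by (rule sets_PiM_I_finite) (auto simp: J_def)
  have BA: "B \<subseteq> A" unfolding A_def B_def by (auto simp: PiE_def Pi_def)
  have J: "J = insert (n+1) {1..n}" "n+1 \<notin> {1..n}" unfolding J_def by auto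
  have gt: "measure (Mi \<theta> (n+1)) {t-y<..} = c" unfolding c_def using meas_gt[of "\<theta>/2" "t-y"] th yt by simp
  have mA: "measure ?N A = c"
  proof -
    have "measure ?N A = (\<Prod>i\<in>J. measure (Mi \<theta> i) (if i = n+1 then {t-y<..} else UNIV))"
      unfolding A_def by (rule prod_meas[OF th]) (auto simp: J_def)
    also have "\<dots> = measure (Mi \<theta> (n+1)) {t-y<..} * (\<Prod>i\<in>{1..n}. measure (Mi \<theta> i) (if i = n+1 then {t-y<..} else UNIV))"
      unfolding J(1) using J(2) by simp
    also have "(\<Prod>i\<in>{1..n}. measure (Mi \<theta> i) (if i = n+1 then {t-y<..} else UNIV)) = (\<Prod>i\<in>{1..n}. 1)"
    proof (intro prod.cong refl)
      fix i assume "i \<in> {1..n}"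
      have "measure (density lborel (exponential_density (\<theta>/2))) (space (density lborel (exponential_density (\<theta>/2)))) = 1"
        using prob_space.prob_space[OF prob_space_exponential_density, of "\<theta>/2"] th by simp
      thus "measure (Mi \<theta> i) (if i = n+1 then {t-y<..} else UNIV) = 1" using \<open>i \<in> {1..n}\<close> by simp
    qed
    finally show ?thesis using gt by simp
  qed
  have mB: "measure ?N B = c * Fy ^ n"
  proof -
    have "measure ?N B = (\<Prod>i\<in>J. measure (Mi \<theta> i) (if i = n+1 then {t-y<..} else {..y}))"
      unfolding B_def by (rule prod_meas[OF th]) (auto simp: J_def)
    also have "\<dots> = measure (Mi \<theta> (n+1)) {t-y<..} * (\<Prod>i\<in>{1..n}. measure (Mi \<theta> i) (if i = n+1 then {t-y<..} else {..y}))"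
      unfolding J(1) using J(2) by simp
    also have "(\<Prod>i\<in>{1..n}. measure (Mi \<theta> i) (if i = n+1 then {t-y<..} else {..y})) = (\<Prod>i\<in>{1..n}. Fy)"
      by (intro prod.cong refl) (use th in \<open>auto simp: Fy_def meas_le2\<close>)
    finally show ?thesis using gt by simp
  qed
  have "emeasure ?N (A - B) = ennreal (measure ?N (A - B))" by (rule N.emeasure_eq_measure)
  also have "measure ?N (A - B) = c - c * Fy ^ n" using N.finite_measure_Diff[OF As Bs BA] mA mB by simp
  finally show ?thesis using seteq unfolding J_def c_def Fy_def by simp
qed



lemma comp_measJ[measurable]:
  assumes "i \<in> J"
  shows "(\<lambda>\<omega>. \<omega> i) \<in> borel_measurable (PiM J (Mi \<theta>))"
proof -
  have "(\<lambda>\<omega>. \<omega> i) \<in> measurable (PiM J (Mi \<theta>)) (Mi \<theta> i)"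
    by (rule measurable_component_singleton) (use assms in auto)
  thus ?thesis by (simp add: measurable_cong_sets[OF refl sets_Mi])
qed

lemma EV1:
  assumes th: "\<theta> > 0" and t: "t \<ge> 0"
  shows "measure (star_space \<theta> n) {\<omega> \<in> space (star_space \<theta> n). \<omega> 0 \<le> t \<and> (\<exists>i\<in>{1..n}. \<omega> 0 < \<omega> i) \<and> t - \<omega> 0 < \<omega> (n+1)}
    = (\<Sum>i=1..n. real (n choose i) * (-1) ^ (i - 1) * (exp (- t * (\<theta>/2)) - exp (- t) * exp (- t * (\<theta>/2)) ^ i) / (1 + (real i - 1) * (\<theta>/2)))"
    (is "measure _ ?E = ?V")
proof -
  define a where "a = \<theta>/2"
  have a: "a > 0" using th by (simp add: a_def)
  define J where "J = {1..n+1}"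
  have M: "star_space \<theta> n = PiM (insert 0 J) (Mi \<theta>)"
    unfolding star_space_def J_def by (rule arg_cong2[where f=PiM]) auto
  interpret P: product_prob_space "Mi \<theta>" using pps th by auto
  have Es: "?E \<in> sets (PiM (insert 0 J) (Mi \<theta>))" using EV1_sets[of \<theta> n t] unfolding M .
  define G where "G y = ennreal (if y \<le> t then exp (- (t - y) * a) - exp (- (t - y) * a) * (if y < 0 then 0 else 1 - exp (- y * a)) ^ n else 0)" for y
  have inner: "(\<integral>\<^sup>+ x. indicator ?E (x(0 := y)) \<partial>PiM J (Mi \<theta>)) = G y" for y
  proof (cases "y \<le> t")
    case True
    let ?S = "{x \<in> space (PiM J (Mi \<theta>)). (\<exists>i\<in>{1..n}. y < x i) \<and> t - y < x (n+1)}"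
    have Ss: "?S \<in> sets (PiM J (Mi \<theta>))" unfolding J_def by measurable
    have "(\<integral>\<^sup>+ x. indicator ?E (x(0 := y)) \<partial>PiM J (Mi \<theta>)) = (\<integral>\<^sup>+ x. indicator ?S x \<partial>PiM J (Mi \<theta>))"
    proof (rule nn_integral_cong)
      fix x assume x: "x \<in> space (PiM J (Mi \<theta>))"
      hence "x(0 := y) \<in> space (star_space \<theta> n)" unfolding M by (auto simp: space_PiM PiE_def J_def extensional_def)
      thus "indicator ?E (x(0 := y)) = indicator ?S x" using x True by (auto simp: indicator_def)
    qed
    also have "\<dots> = emeasure (PiM J (Mi \<theta>)) ?S" using Ss by simp
    also have "\<dots> = G y" unfolding J_def G_def a_def using inner_meas[OF th True, of n] True by simp
    finally show ?thesis .
  next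
    case False
    have "(\<integral>\<^sup>+ x. indicator ?E (x(0 := y)) \<partial>PiM J (Mi \<theta>)) = (\<integral>\<^sup>+ x. 0 \<partial>PiM J (Mi \<theta>))"
      by (rule nn_integral_cong) (use False in \<open>auto simp: indicator_def\<close>)
    thus ?thesis using False by (simp add: G_def)
  qed
  define h where "h y = (if y \<in> {0..t} then exp (- y) * (1 - (1 - exp (- y * a)) ^ n) * exp (- (t - y) * a) else 0)" for y
  have hnn: "0 \<le> h y" for y
  proof -
    have "y \<ge> 0 \<Longrightarrow> (1 - exp (- y * a)) ^ n \<le> 1" using a by (intro power_le_one) auto
    thus ?thesis unfolding h_def by auto
  qed
  have Gm: "G \<in> borel_measurable borel" unfolding G_def by measurable
  have "emeasure (star_space \<theta> n) ?E = (\<integral>\<^sup>+ w. indicator ?E w \<partial>PiM (insert 0 J) (Mi \<theta>))"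
    using Es unfolding M by simp
  also have "\<dots> = (\<integral>\<^sup>+ y. (\<integral>\<^sup>+ x. indicator ?E (x(0 := y)) \<partial>PiM J (Mi \<theta>)) \<partial>Mi \<theta> 0)"
  proof -
    have Ind: "(indicator ?E :: _ \<Rightarrow> ennreal) \<in> borel_measurable (PiM (insert 0 J) (Mi \<theta>))"
      using Es by (rule borel_measurable_indicator)
    show ?thesis by (rule P.product_nn_integral_insert_rev[OF _ _ Ind]) (auto simp: J_def)
  qed
  also have "\<dots> = (\<integral>\<^sup>+ y. G y \<partial>Mi \<theta> 0)"
    by (rule nn_integral_cong) (rule inner)
  also have "\<dots> = (\<integral>\<^sup>+ y. G y \<partial>density lborel (exponential_density 1))"
    by simp
  also have "\<dots> = (\<integral>\<^sup>+ y. ennreal (exponential_density 1 y) * G y \<partial>lborel)"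
    by (rule nn_integral_density) (use Gm in auto)
  also have "\<dots> = (\<integral>\<^sup>+ y. ennreal (h y) \<partial>lborel)"
  proof (rule nn_integral_cong)
    fix y :: real
    show "ennreal (exponential_density 1 y) * G y = ennreal (h y)"
    proof (cases "y < 0")
      case True thus ?thesis by (simp add: exponential_density_def h_def)
    next
      case False
      show ?thesis
      proof (cases "y \<le> t")
        case True
        have le1: "(1 - exp (- y * a)) ^ n \<le> 1" using a False by (intro power_le_one) auto
        have "ennreal (exponential_density 1 y) * G y =
           ennreal (exp (- y)) * ennreal (exp (- (t - y) * a) - exp (- (t - y) * a) * (1 - exp (- y * a)) ^ n)"
          using False True by (simp add: exponential_density_def G_def)
        also have "\<dots> = ennreal (exp (- y) * (exp (- (t - y) * a) - exp (- (t - y) * a) * (1 - exp (- y * a)) ^ n))"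
          using le1 by (subst ennreal_mult) (auto simp: mult_le_cancel_left1)
        also have "exp (- y) * (exp (- (t - y) * a) - exp (- (t - y) * a) * (1 - exp (- y * a)) ^ n) = h y"
          using False True by (simp add: h_def algebra_simps)
        finally show ?thesis .
      next
        case False2: False
        thus ?thesis using False by (simp add: G_def h_def)
      qed
    qed
  qed
  also have "\<dots> = ennreal ?V"
  proof (rule nn_integral_has_integral_lborel)
    show "h \<in> borel_measurable borel" unfolding h_def by measurable
    show "0 \<le> h y" for y by (rule hnn)
    have "((\<lambda>y. exp (- y) * (1 - (1 - exp (- y * a)) ^ n) * exp (- (t - y) * a)) has_integral ?V) {0..t}"
      using integ[OF a t, of n] unfolding a_def by simp
    thus "(h has_integral ?V) UNIV"
      unfolding h_def has_integral_restrict_UNIV .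
  qed
  finally have em: "emeasure (star_space \<theta> n) ?E = ennreal ?V" .
  have "0 \<le> ?V"
  proof -
    have "((\<lambda>y. exp (- y) * (1 - (1 - exp (- y * a)) ^ n) * exp (- (t - y) * a)) has_integral ?V) {0..t}"
      using integ[OF a t, of n] unfolding a_def by simp
    hence "(h has_integral ?V) UNIV" unfolding h_def has_integral_restrict_UNIV .
    thus ?thesis using hnn by (rule has_integral_nonneg)
  qed
  thus ?thesis using em by (simp add: measure_def)
qed



lemma split01: "(n::nat) \<ge> 1 \<Longrightarrow> (\<Sum>k=0..n. f k) = f 0 + f 1 + (\<Sum>k=2..n. (f k :: real))"
proof -
  assume n: "n \<ge> 1"
  have "{0..n} = insert 0 (insert 1 {2..n})" using n by auto
  thus ?thesis by simp
qed

lemma split1: "(n::nat) \<ge> 1 \<Longrightarrow> (\<Sum>k=1..n. f k) = f 1 + (\<Sum>k=2..n. (f k :: real))"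
proof -
  assume n: "n \<ge> 1"
  have "{1..n} = insert 1 {2..n}" using n by auto
  thus ?thesis by simp
qed

lemma Bexp:
  fixes p e :: real
  assumes j: "j \<le> n"
  shows "e * real (n choose j) * p ^ j * (1 - p) ^ (n - j) =
    (\<Sum>k=0..n. real (n choose k) * real (k choose j) * (-1) ^ (k - j) * (e * p ^ k))"
proof -
  have "(1 - p) ^ (n - j) = (-p + 1) ^ (n - j)" by simp
  also have "\<dots> = (\<Sum>m\<le>n-j. real ((n-j) choose m) * (-p) ^ m * 1 ^ (n - j - m))" by (rule binomial_ring)
  also have "\<dots> = (\<Sum>m=0..n-j. real ((n-j) choose m) * (-1) ^ m * p ^ m)"
    unfolding atMost_atLeast0
  proof (intro sum.cong refl)
    fix m
    have "(-p) ^ m = (-1) ^ m * p ^ m" by (metis mult_minus1 power_mult_distrib)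
    thus "real ((n-j) choose m) * (-p) ^ m * 1 ^ (n - j - m) = real ((n-j) choose m) * (-1) ^ m * p ^ m" by simp
  qed
  finally have b: "(1 - p) ^ (n - j) = (\<Sum>m=0..n-j. real ((n-j) choose m) * (-1) ^ m * p ^ m)" .
  define F where "F k = real (n choose k) * real (k choose j) * (-1) ^ (k - j) * (e * p ^ k)" for k
  have "e * real (n choose j) * p ^ j * (1 - p) ^ (n - j) =
     (\<Sum>m=0..n-j. e * real (n choose j) * p ^ j * (real ((n-j) choose m) * (-1) ^ m * p ^ m))"
    unfolding b sum_distrib_left ..
  also have "\<dots> = (\<Sum>m=0..n-j. F (m + j))"
  proof (intro sum.cong refl)
    fix m assume m: "m \<in> {0..n-j}"
    have c: "(n choose (m+j)) * ((m+j) choose j) = (n choose j) * ((n - j) choose m)"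
      using choose_mult[of j "m+j" n] m j by auto
    have "real (n choose (m+j)) * real ((m+j) choose j) = real (n choose j) * real ((n - j) choose m)"
      using arg_cong[OF c, of real] by simp
    thus "e * real (n choose j) * p ^ j * (real ((n-j) choose m) * (-1) ^ m * p ^ m) = F (m + j)"
      unfolding F_def by (simp add: power_add algebra_simps)
  qed
  also have "\<dots> = (\<Sum>k=j..n. F k)"
    using sum.shift_bounds_cl_nat_ivl[of F 0 j "n-j"] j by simp
  also have "\<dots> = (\<Sum>k=0..n. F k)"
    by (rule sum.mono_neutral_left) (auto simp: F_def)
  finally show ?thesis unfolding F_def .
qed



lemma lamE: "k \<ge> 2 \<Longrightarrow> exp (- lam \<theta> k * t) = exp (- t) * exp (- t * (\<theta>/2)) ^ k"
proof -
  assume k: "k \<ge> 2"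
  have "- lam \<theta> k * t = - t + real k * (- t * (\<theta>/2))" using k by (simp add: lam_def algebra_simps)
  hence "exp (- lam \<theta> k * t) = exp (- t + real k * (- t * (\<theta>/2)))" by simp
  also have "\<dots> = exp (- t) * exp (real k * (- t * (\<theta>/2)))" by (rule exp_add)
  also have "exp (real k * (- t * (\<theta>/2))) = exp (- t * (\<theta>/2)) ^ k" by (rule exp_of_nat_mult)
  finally show ?thesis .
qed

lemma sgn_mult: "j \<le> k \<Longrightarrow> 1 \<le> j \<Longrightarrow> ((-1::real) ^ (k - 1) * (-1) ^ (j - 1)) = (-1) ^ (k - j)"
proof -
  assume a: "j \<le> k" "1 \<le> j"
  have "(k - 1) + (j - 1) = (k - j) + 2 * (j - 1)" using a by simp
  hence "((-1::real) ^ (k - 1) * (-1) ^ (j - 1)) = (-1) ^ ((k - j) + 2 * (j - 1))" by (metis power_add)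
  thus ?thesis by (simp add: power_add power_mult)
qed

lemma qp2:
  assumes th: "\<theta> > 0" and k: "k \<ge> 2" and j: "j \<ge> 2"
  shows "Qc \<theta> n k * Pc \<theta> j k = real (n choose k) * real (k choose j) * (-1) ^ (k - j)"
proof (cases "j \<le> k")
  case True
  have c: "1 + (real k - 1) * \<theta> / 2 > 0" using th k by (simp add: add_pos_nonneg)
  have d: "1 + real k * \<theta> / 2 > 0" using th k by (simp add: add_pos_nonneg)
  have k1: "real k - 1 > 0" using k by simp
  have "Qc \<theta> n k * Pc \<theta> j k = real (n choose k) * real (k choose j) * ((-1) ^ (k - 1) * (-1) ^ (j - 1))
      * (((real k - 1) * (1 + real k * \<theta> / 2)) / (1 + (real k - 1) * \<theta> / 2) * ((1 + (real k - 1) * \<theta> / 2) / ((real k - 1) * (1 + real k * \<theta> / 2))))"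
    using k j by (simp add: Qc_def Pc_def)
  also have "(((real k - 1) * (1 + real k * \<theta> / 2)) / (1 + (real k - 1) * \<theta> / 2) * ((1 + (real k - 1) * \<theta> / 2) / ((real k - 1) * (1 + real k * \<theta> / 2)))) = 1"
  proof -
    have uv: "u \<noteq> 0 \<Longrightarrow> v \<noteq> 0 \<Longrightarrow> u / v * (v / u) = (1::real)" for u v by simp
    show ?thesis by (rule uv) (use c d k1 in auto)
  qed
  finally show ?thesis using sgn_mult[OF True] j by simp
next
  case False
  thus ?thesis using k j by (simp add: Qc_def Pc_def)
qed

lemma alg_ge2:
  assumes th: "\<theta> > 0" and j: "2 \<le> j"
  shows "(\<Sum>k=0..n. real (n choose k) * real (k choose j) * (-1) ^ (k - j) * (exp (- t) * exp (- t * (\<theta>/2)) ^ k))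
     = (\<Sum>k=0..n. exp (- lam \<theta> k * t) * Qc \<theta> n k * Pc \<theta> j k)"
proof (intro sum.cong refl)
  fix k assume "k \<in> {0..n}"
  show "real (n choose k) * real (k choose j) * (-1) ^ (k - j) * (exp (- t) * exp (- t * (\<theta>/2)) ^ k)
     = exp (- lam \<theta> k * t) * Qc \<theta> n k * Pc \<theta> j k"
  proof (cases "k \<ge> 2")
    case True
    thus ?thesis using qp2[OF th True j, of n] lamE[OF True, of \<theta> t] by simp
  next
    case False
    thus ?thesis using j by (simp add: Pc_def)
  qed
qed



lemma Qc1_split: "n \<ge> 1 \<Longrightarrow> Qc \<theta> n 1 = real n + (\<Sum>i=2..n. real (n choose i) * (-1) ^ (i - 1) / (1 + (real i - 1) * \<theta> / 2))"
  unfolding Qc_def by (subst split1) simp_all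

lemma alg_1:
  fixes t :: real
  assumes th: "\<theta> > 0" and n: "n \<ge> 1"
  defines "e \<equiv> exp (- t)" and "p \<equiv> exp (- t * (\<theta>/2))"
  shows "(\<Sum>k=0..n. real (n choose k) * real (k choose 1) * (-1) ^ (k - 1) * (e * p ^ k))
     + (\<Sum>i=1..n. real (n choose i) * (-1) ^ (i - 1) * (p - e * p ^ i) / (1 + (real i - 1) * (\<theta>/2)))
     = (\<Sum>k=0..n. exp (- lam \<theta> k * t) * Qc \<theta> n k * Pc \<theta> 1 k)"
proof -
  define B where "B k = real (n choose k) * real (k choose 1) * (-1) ^ (k - 1) * (e * p ^ k)" for k
  define I where "I i = real (n choose i) * (-1) ^ (i - 1) * (p - e * p ^ i) / (1 + (real i - 1) * (\<theta>/2))" for i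
  define R where "R k = exp (- lam \<theta> k * t) * Qc \<theta> n k * Pc \<theta> 1 k" for k
  define q where "q i = real (n choose i) * (-1) ^ (i - 1) / (1 + (real i - 1) * \<theta> / 2)" for i
  have R0: "R 0 = 0" by (simp add: R_def Pc_def)
  have R1: "R 1 = p * real n + (\<Sum>k=2..n. p * q k)"
  proof -
    have "R 1 = p * Qc \<theta> n 1" by (simp add: R_def Pc_def lam_def p_def mult.commute)
    also have "\<dots> = p * real n + (\<Sum>k=2..n. p * q k)"
      unfolding Qc1_split[OF n] q_def distrib_left sum_distrib_left ..
    finally show ?thesis .
  qed
  have tm: "B k + I k = p * q k + R k" if k: "k \<in> {2..n}" for k
  proof -
    have k2: "k \<ge> 2" using k by simp
    define C where "C = real (n choose k)"
    define s where "s = ((-1::real) ^ (k - 1))"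
    define x where "x = e * p ^ k"
    define c where "c = 1 + (real k - 1) * \<theta> / 2"
    define d where "d = 1 + real k * \<theta> / 2"
    have c: "c > 0" using th k2 unfolding c_def by (simp add: add_pos_nonneg)
    have key: "real k * c - 1 = (real k - 1) * d" unfolding c_def d_def by (simp add: algebra_simps)
    have "B k = C * real k * s * x" unfolding B_def C_def s_def x_def by simp
    moreover have "I k = C * s * (p - x) / c" unfolding I_def C_def s_def x_def c_def by (simp add: algebra_simps)
    moreover have "q k = C * s / c" unfolding q_def C_def s_def c_def by simp
    moreover have "R k = x * (C * s * ((real k - 1) * d) / c)"
      using k2 lamE[OF k2, of \<theta> t] unfolding R_def x_def C_def s_def c_def d_def e_def p_def
      by (simp add: Qc_def Pc_def)
    moreover have "C * real k * s * x + C * s * (p - x) / c = p * (C * s / c) + x * (C * s * ((real k - 1) * d) / c)"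
    proof -
      have "C * real k * s * x + C * s * (p - x) / c = (C * s * x * (real k * c - 1) + C * s * p) / c"
        using c by (simp add: field_simps)
      also have "\<dots> = (C * s * x * ((real k - 1) * d) + C * s * p) / c" unfolding key ..
      also have "\<dots> = p * (C * s / c) + x * (C * s * ((real k - 1) * d) / c)"
        using c by (simp add: field_simps)
      finally show ?thesis .
    qed
    ultimately show ?thesis by simp
  qed
  have "(\<Sum>k=0..n. B k) + (\<Sum>i=1..n. I i) = B 0 + B 1 + I 1 + ((\<Sum>k=2..n. B k) + (\<Sum>k=2..n. I k))"
    unfolding split01[OF n] split1[OF n] by simp
  also have "(\<Sum>k=2..n. B k) + (\<Sum>k=2..n. I k) = (\<Sum>k=2..n. p * q k) + (\<Sum>k=2..n. R k)"
    unfolding sum.distrib[symmetric] by (intro sum.cong refl tm)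
  also have "B 0 + B 1 + I 1 = p * real n" by (simp add: B_def I_def algebra_simps)
  also have "p * real n + ((\<Sum>k=2..n. p * q k) + (\<Sum>k=2..n. R k)) = R 0 + R 1 + (\<Sum>k=2..n. R k)"
    using R0 R1 by simp
  also have "\<dots> = (\<Sum>k=0..n. R k)" unfolding split01[OF n] ..
  finally show ?thesis unfolding B_def I_def R_def .
qed

lemma alg_0:
  fixes t :: real
  assumes th: "\<theta> > 0" and n: "n \<ge> 1"
  defines "e \<equiv> exp (- t)" and "p \<equiv> exp (- t * (\<theta>/2))"
  shows "(\<Sum>k=0..n. real (n choose k) * real (k choose 0) * (-1) ^ (k - 0) * (e * p ^ k))
     + (1 - e)
     - (\<Sum>i=1..n. real (n choose i) * (-1) ^ (i - 1) * (p - e * p ^ i) / (1 + (real i - 1) * (\<theta>/2)))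
     = (\<Sum>k=0..n. exp (- lam \<theta> k * t) * Qc \<theta> n k * Pc \<theta> 0 k)"
proof -
  define B where "B k = real (n choose k) * real (k choose 0) * (-1) ^ (k - 0) * (e * p ^ k)" for k
  define I where "I i = real (n choose i) * (-1) ^ (i - 1) * (p - e * p ^ i) / (1 + (real i - 1) * (\<theta>/2))" for i
  define R where "R k = exp (- lam \<theta> k * t) * Qc \<theta> n k * Pc \<theta> 0 k" for k
  define q where "q i = real (n choose i) * (-1) ^ (i - 1) / (1 + (real i - 1) * \<theta> / 2)" for i
  have R0: "R 0 = 1" by (simp add: R_def Pc_def Qc_def lam_def)
  have R1: "R 1 = - (p * real n + (\<Sum>k=2..n. p * q k))"
  proof -
    have "R 1 = - (p * Qc \<theta> n 1)" by (simp add: R_def Pc_def lam_def p_def mult.commute)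
    also have "p * Qc \<theta> n 1 = p * real n + (\<Sum>k=2..n. p * q k)"
      unfolding Qc1_split[OF n] q_def distrib_left sum_distrib_left ..
    finally show ?thesis .
  qed
  have tm: "B k - I k = - (p * q k) + R k" if k: "k \<in> {2..n}" for k
  proof -
    have k2: "k \<ge> 2" using k by simp
    define C where "C = real (n choose k)"
    define s where "s = ((-1::real) ^ (k - 1))"
    define x where "x = e * p ^ k"
    define c where "c = 1 + (real k - 1) * \<theta> / 2"
    define d where "d = 1 + real k * \<theta> / 2"
    have c: "c > 0" using th k2 unfolding c_def by (simp add: add_pos_nonneg)
    have d: "d > 0" using th k2 unfolding d_def by (simp add: add_pos_nonneg)
    have sk: "(-1::real) ^ k = - s" unfolding s_def using k2 by (cases k) auto
    have key: "c - 1 = (real k - 1) * (\<theta> / 2)" unfolding c_def by (simp add: algebra_simps)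
    have "B k = - (C * s * x)" unfolding B_def C_def x_def using sk by simp
    moreover have "I k = C * s * (p - x) / c" unfolding I_def C_def s_def x_def c_def by (simp add: algebra_simps)
    moreover have "q k = C * s / c" unfolding q_def C_def s_def c_def by simp
    moreover have "R k = x * (C * s * ((real k - 1) * d) / c) * (- (\<theta> / 2) / d)"
      using k2 lamE[OF k2, of \<theta> t] unfolding R_def x_def C_def s_def c_def d_def e_def p_def
      by (simp add: Qc_def Pc_def)
    moreover have "- (C * s * x) - C * s * (p - x) / c = - (p * (C * s / c)) + x * (C * s * ((real k - 1) * d) / c) * (- (\<theta> / 2) / d)"
    proof -
      have "- (C * s * x) - C * s * (p - x) / c = (- (C * s * x) * (c - 1) - C * s * p) / c"
        using c by (simp add: field_simps)
      also have "\<dots> = (- (C * s * x) * ((real k - 1) * (\<theta> / 2)) - C * s * p) / c" unfolding key ..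
      also have "\<dots> = - (p * (C * s / c)) + x * (C * s * ((real k - 1) * d) / c) * (- (\<theta> / 2) / d)"
        using c d by (simp add: field_simps)
      finally show ?thesis .
    qed
    ultimately show ?thesis by simp
  qed
  have "(\<Sum>k=0..n. B k) + (1 - e) - (\<Sum>i=1..n. I i) = B 0 + B 1 + (1 - e) - I 1 + ((\<Sum>k=2..n. B k) - (\<Sum>k=2..n. I k))"
    unfolding split01[OF n] split1[OF n] by simp
  also have "(\<Sum>k=2..n. B k) - (\<Sum>k=2..n. I k) = - (\<Sum>k=2..n. p * q k) + (\<Sum>k=2..n. R k)"
    unfolding sum_subtractf[symmetric] sum_negf[symmetric] sum.distrib[symmetric] by (intro sum.cong refl tm)
  also have "B 0 + B 1 + (1 - e) - I 1 = 1 - p * real n" by (simp add: B_def I_def algebra_simps)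
  also have "1 - p * real n + (- (\<Sum>k=2..n. p * q k) + (\<Sum>k=2..n. R k)) = R 0 + R 1 + (\<Sum>k=2..n. R k)"
    using R0 R1 by simp
  also have "\<dots> = (\<Sum>k=0..n. R k)" unfolding split01[OF n] ..
  finally show ?thesis unfolding B_def I_def R_def .
qed



lemma Bsets:
  assumes th: "\<theta> > 0"
  shows "{\<omega> \<in> space (star_space \<theta> n). t < \<omega> 0 \<and> card {i\<in>{1..n}. t < \<omega> i} = j} \<in> sets (star_space \<theta> n)"
proof -
  define I where "I = {0..n+1}"
  define Sj where "Sj = {S. S \<subseteq> {1..n} \<and> card S = j}"
  define F where "F S i = (if i = 0 then {t<..} else if i \<in> S then {t<..} else if i \<le> n then {..t} else (UNIV::real set))" for S :: "nat set" and i
  let ?M = "star_space \<theta> n"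
  have setq: "{\<omega> \<in> space ?M. t < \<omega> 0 \<and> card {i\<in>{1..n}. t < \<omega> i} = j} = (\<Union>S\<in>Sj. PiE I (F S))"
  proof (intro equalityI subsetI)
    fix \<omega> assume w: "\<omega> \<in> {\<omega> \<in> space ?M. t < \<omega> 0 \<and> card {i\<in>{1..n}. t < \<omega> i} = j}"
    define S where "S = {i\<in>{1..n}. t < \<omega> i}"
    have "S \<in> Sj" using w unfolding S_def Sj_def by auto
    moreover have "\<omega> \<in> PiE I (F S)" using w unfolding S_def F_def I_def space_star
      by (auto simp: PiE_def Pi_def)
    ultimately show "\<omega> \<in> (\<Union>S\<in>Sj. PiE I (F S))" by blast
  next
    fix \<omega> assume "\<omega> \<in> (\<Union>S\<in>Sj. PiE I (F S))"
    then obtain S where S: "S \<in> Sj" "\<omega> \<in> PiE I (F S)" by blast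
    have "\<omega> \<in> space ?M" using S(2) unfolding space_star I_def by (auto simp: PiE_def)
    moreover have "t < \<omega> 0" using S(2) unfolding I_def F_def by (auto simp: PiE_def Pi_def)
    moreover have "{i\<in>{1..n}. t < \<omega> i} = S"
    proof (intro equalityI subsetI)
      fix i assume "i \<in> {i\<in>{1..n}. t < \<omega> i}"
      hence "i \<in> I" "\<omega> i \<in> F S i" "i \<noteq> 0" "i \<le> n" "t < \<omega> i" using S(2) unfolding I_def by (auto simp: PiE_def Pi_def)
      thus "i \<in> S" unfolding F_def by (auto split: if_splits)
    next
      fix i assume "i \<in> S"
      hence "i \<in> {1..n}" using S(1) unfolding Sj_def by auto
      hence "i \<in> I" "\<omega> i \<in> F S i" using S(2) unfolding I_def by (auto simp: PiE_def Pi_def)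
      thus "i \<in> {i\<in>{1..n}. t < \<omega> i}" using \<open>i \<in> S\<close> \<open>i \<in> {1..n}\<close> unfolding F_def by auto
    qed
    ultimately show "\<omega> \<in> {\<omega> \<in> space ?M. t < \<omega> 0 \<and> card {i\<in>{1..n}. t < \<omega> i} = j}"
      using S(1) unfolding Sj_def by auto
  qed
  have finSj: "finite Sj" unfolding Sj_def by (rule finite_subset[of _ "Pow {1..n}"]) auto
  have setsF: "PiE I (F S) \<in> sets ?M" for S
    unfolding star_space_def I_def by (rule sets_PiM_I_finite) (auto simp: F_def)
  show ?thesis unfolding setq using finSj setsF by auto
qed

lemma E0meas:
  assumes th: "\<theta> > 0" and t: "t \<ge> 0"
  shows "measure (star_space \<theta> n) {\<omega> \<in> space (star_space \<theta> n). \<omega> 0 \<le> t} = 1 - exp (- t)"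
proof -
  define I where "I = {0..n+1}"
  have seteq: "{\<omega> \<in> space (star_space \<theta> n). \<omega> 0 \<le> t} = PiE I (\<lambda>i. if i = 0 then {..t} else UNIV)"
    unfolding space_star I_def by (auto simp: PiE_def Pi_def)
  have "measure (star_space \<theta> n) (PiE I (\<lambda>i. if i = 0 then {..t} else UNIV)) =
      (\<Prod>i\<in>I. measure (Mi \<theta> i) (if i = 0 then {..t} else UNIV))"
    unfolding star_space_def I_def by (rule prod_meas[OF th]) auto
  also have "(\<Prod>i\<in>I. measure (Mi \<theta> i) (if i = 0 then {..t} else UNIV)) =
      measure (Mi \<theta> 0) {..t} * (\<Prod>i\<in>{1..n+1}. measure (Mi \<theta> i) (if i = 0 then {..t} else UNIV))"
  proof -
    have "I = insert 0 {1..n+1}" unfolding I_def by auto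
    thus ?thesis by simp
  qed
  also have "(\<Prod>i\<in>{1..n+1}. measure (Mi \<theta> i) (if i = 0 then {..t} else UNIV)) = (\<Prod>i\<in>{1..n+1}. 1)"
  proof (intro prod.cong refl)
    fix i :: nat assume "i \<in> {1..n+1}"
    have "measure (density lborel (exponential_density (\<theta>/2))) (space (density lborel (exponential_density (\<theta>/2)))) = 1"
      using prob_space.prob_space[OF prob_space_exponential_density, of "\<theta>/2"] th by simp
    thus "measure (Mi \<theta> i) (if i = 0 then {..t} else UNIV) = 1" using \<open>i \<in> {1..n+1}\<close> by simp
  qed
  also have "measure (Mi \<theta> 0) {..t} = 1 - exp (- t)" using meas_le[of 1 t] t by simp
  finally show ?thesis unfolding seteq by simp
qed

theorem theorem5:
  fixes \<theta> t :: real and n j :: nat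
  assumes "\<theta> > 0" and "t \<ge> 0" and "n \<ge> 1" and "j \<le> n"
  shows "measure (star_space \<theta> n) {\<omega> \<in> space (star_space \<theta> n). A_count n t \<omega> = j}
           = (\<Sum>k=0..n. exp (- lam \<theta> k * t) * Qc \<theta> n k * Pc \<theta> j k)"
proof -
  note th = assms(1) and t = assms(2) and n = assms(3) and j = assms(4)
  let ?M = "star_space \<theta> n"
  interpret Q: prob_space ?M unfolding star_space_def by (rule prob_space_PiM) (rule prob_Mi[OF th])
  define Bs where "Bs j = {\<omega> \<in> space ?M. t < \<omega> 0 \<and> card {i\<in>{1..n}. t < \<omega> i} = j}" for j
  define E1 where "E1 = {\<omega> \<in> space ?M. \<omega> 0 \<le> t \<and> (\<exists>i\<in>{1..n}. \<omega> 0 < \<omega> i) \<and> t - \<omega> 0 < \<omega> (n+1)}"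
  define E0 where "E0 = {\<omega> \<in> space ?M. \<omega> 0 \<le> t}"
  have Bss: "Bs j \<in> sets ?M" for j unfolding Bs_def by (rule Bsets[OF th])
  have E1s: "E1 \<in> sets ?M" unfolding E1_def by (rule EV1_sets)
  have E0s: "E0 \<in> sets ?M" unfolding E0_def by measurable
  have E10: "E1 \<subseteq> E0" unfolding E1_def E0_def by auto
  have mB: "measure ?M (Bs j) = (\<Sum>k=0..n. real (n choose k) * real (k choose j) * (-1) ^ (k - j) * (exp (- t) * exp (- t * (\<theta>/2)) ^ k))"
    if "j \<le> n" for j
    unfolding Bs_def Bmeas[OF th t that] by (rule Bexp[OF that])
  have mE1: "measure ?M E1 = (\<Sum>i=1..n. real (n choose i) * (-1) ^ (i - 1) * (exp (- t * (\<theta>/2)) - exp (- t) * exp (- t * (\<theta>/2)) ^ i) / (1 + (real i - 1) * (\<theta>/2)))"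
    unfolding E1_def by (rule EV1[OF th t])
  have mE0: "measure ?M E0 = 1 - exp (- t)" unfolding E0_def by (rule E0meas[OF th t])
  show ?thesis
  proof (cases "j \<ge> 2")
    case True
    have "{\<omega> \<in> space ?M. A_count n t \<omega> = j} = Bs j"
      unfolding Bs_def A_count_def using True by auto
    thus ?thesis using mB[OF j] alg_ge2[OF th True, of n t] by simp
  next
    case False
    hence j01: "j = 0 \<or> j = 1" by auto
    thus ?thesis
    proof
      assume j1: "j = 1"
      have "{\<omega> \<in> space ?M. A_count n t \<omega> = j} = Bs 1 \<union> E1"
        unfolding Bs_def E1_def A_count_def j1 by auto
      moreover have "Bs 1 \<inter> E1 = {}" unfolding Bs_def E1_def by auto
      ultimately have "measure ?M {\<omega> \<in> space ?M. A_count n t \<omega> = j} = measure ?M (Bs 1) + measure ?M E1"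
        using Q.finite_measure_Union[OF Bss E1s] by simp
      thus ?thesis using mB[of 1] mE1 alg_1[OF th n, of t] n j1 by simp
    next
      assume j0: "j = 0"
      have "{\<omega> \<in> space ?M. A_count n t \<omega> = j} = Bs 0 \<union> (E0 - E1)"
        unfolding Bs_def E1_def E0_def A_count_def j0 by auto
      moreover have "Bs 0 \<inter> (E0 - E1) = {}" unfolding Bs_def E0_def by auto
      ultimately have "measure ?M {\<omega> \<in> space ?M. A_count n t \<omega> = j} = measure ?M (Bs 0) + measure ?M (E0 - E1)"
        using Q.finite_measure_Union[OF Bss sets.Diff[OF E0s E1s]] by simp
      also have "measure ?M (E0 - E1) = measure ?M E0 - measure ?M E1"
        by (rule Q.finite_measure_Diff[OF E0s E1s E10])
      finally show ?thesis using mB[of 0] mE1 mE0 alg_0[OF th n, of t] j0 by simp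
    qed
  qed
qed

end
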